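(* Let $m,n$ be positive integers, let $\mathbf{0}=(0,\dots,0)$ and let $\mathbf{b}$ be any vertex of $\mathcal{CSR}(m,n)$. Then the distance between $\mathbf{0}$ and $\mathbf{b}$ in $\mathcal{CSR}(m,n)$ is $d(\mathbf{0},\mathbf{b})=m-\tau(\mathbf{b})$.
   Context: For positive integers $m,n$, the cyclic simplicial rook graph $\mathcal{CSR}(m,n)$ is the graph whose vertices are the vectors $(a_1,\dots,a_m)\in\mathbb{Z}_n^m$ with $a_1+\cdots+a_m\equiv 0 \pmod n$, two vertices being adjacent if and only if their vectors differ in exactly two coordinates. The distance $d(u,v)$ is the number of edges of a shortest path between $u$ and $v$. For a vertex $\mathbf{b}=(b_1,\dots,b_m)$, a zero partitioning of size $t$ for $\mathbf{b}$ is a partition of $[m]=\{1,\dots,m\}$ into $t$ parts $P_1,\dots,P_t$ such that $\sum_{j\in P_i} b_j\equiv 0\pmod n$ for every $i\in[t]$; the zero partitioning number $\tau(\mathbf{b})$ is the maximum $t$ for which a zero partitioning of size $t$ for $\mathbf{b}$ exists. *)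

theory Defs
  imports Main "HOL-Library.Disjoint_Sets"
begin

text \<open>Vertices of CSR(m,n): vectors (a_1,...,a_m) in Z_n^m with coordinate sum 0 mod n.
  A vector is represented as a function nat => int with a i in {0..<n} for i in {1..m}
  (canonical residues) and a i = 0 outside {1..m}.\<close>
definition csr_vertex :: "nat \<Rightarrow> nat \<Rightarrow> (nat \<Rightarrow> int) \<Rightarrow> bool" where
  "csr_vertex m n a \<longleftrightarrow>
     (\<forall>i\<in>{1..m}. 0 \<le> a i \<and> a i < int n) \<and>
     (\<forall>i. i \<notin> {1..m} \<longrightarrow> a i = 0) \<and>
     (\<Sum>i\<in>{1..m}. a i) mod int n = 0"

definition csr_adj :: "nat \<Rightarrow> nat \<Rightarrow> (nat \<Rightarrow> int) \<Rightarrow> (nat \<Rightarrow> int) \<Rightarrow> bool" where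
  "csr_adj m n a b \<longleftrightarrow> csr_vertex m n a \<and> csr_vertex m n b \<and>
     card {i\<in>{1..m}. a i \<noteq> b i} = 2"

definition csr_walk :: "nat \<Rightarrow> nat \<Rightarrow> (nat \<Rightarrow> (nat \<Rightarrow> int)) \<Rightarrow> nat \<Rightarrow> bool" where
  "csr_walk m n p k \<longleftrightarrow> csr_vertex m n (p 0) \<and> (\<forall>j<k. csr_adj m n (p j) (p (Suc j)))"

definition csr_connected_by :: "nat \<Rightarrow> nat \<Rightarrow> (nat \<Rightarrow> int) \<Rightarrow> (nat \<Rightarrow> int) \<Rightarrow> nat \<Rightarrow> bool" where
  "csr_connected_by m n u v k \<longleftrightarrow> (\<exists>p. csr_walk m n p k \<and> p 0 = u \<and> p k = v)"

definition csr_dist :: "nat \<Rightarrow> nat \<Rightarrow> (nat \<Rightarrow> int) \<Rightarrow> (nat \<Rightarrow> int) \<Rightarrow> nat" where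
  "csr_dist m n u v = (LEAST k. csr_connected_by m n u v k)"

definition zero_partitioning :: "nat \<Rightarrow> nat \<Rightarrow> (nat \<Rightarrow> int) \<Rightarrow> nat set set \<Rightarrow> bool" where
  "zero_partitioning m n b P \<longleftrightarrow> partition_on {1..m} P \<and>
     (\<forall>S\<in>P. (\<Sum>j\<in>S. b j) mod int n = 0)"

definition tau :: "nat \<Rightarrow> nat \<Rightarrow> (nat \<Rightarrow> int) \<Rightarrow> nat" where
  "tau m n b = Max {t. \<exists>P. zero_partitioning m n b P \<and> card P = t}"

end

theory Submission
  imports Defs
begin

lemma part_card_le:
  assumes "partition_on {1..m} P" shows "finite P" "card P \<le> m"
proof -
  show fP: "finite P" using finite_elements[OF _ assms] by simp
  have fin: "\<And>S. S \<in> P \<Longrightarrow> finite S" using assms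
    by (metis Sup_upper finite_atLeastAtMost finite_subset partition_onD1)
  have "card (\<Union>P) = (\<Sum>S\<in>P. card S)"
    using card_Union_disjoint[OF partition_onD2[OF assms]] fin by auto
  also have "\<dots> \<ge> (\<Sum>S\<in>P. 1)"
    by (rule sum_mono) (metis One_nat_def Suc_leI assms card_gt_0_iff fin partition_onD3)
  finally have "card P \<le> card (\<Union>P)" by simp
  moreover have "\<Union>P = {1..m}" using partition_onD1[OF assms] by simp
  ultimately show "card P \<le> m" by simp
qed

lemma walk_snoc:
  assumes "csr_walk m n p k" "csr_adj m n (p k) w"
  shows "csr_walk m n (p(Suc k := w)) (Suc k)"
  using assms unfolding csr_walk_def by (auto simp: less_Suc_eq)

lemma sum_diff_loc:
  assumes "finite T" "\<And>j. j \<in> T \<Longrightarrow> j \<notin> D \<Longrightarrow> v j = w j"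
  shows "(\<Sum>j\<in>T. w j) - (\<Sum>j\<in>T. v j) = (\<Sum>j\<in>T \<inter> D. w j - (v j::int))"
proof -
  have "(\<Sum>j\<in>T. w j) - (\<Sum>j\<in>T. v j) = (\<Sum>j\<in>T. w j - v j)" by (simp add: sum_subtractf)
  also have "\<dots> = (\<Sum>j\<in>T \<inter> D. w j - v j)"
    by (rule sum.mono_neutral_right) (use assms in auto)
  finally show ?thesis .
qed

lemma sum_upd:
  assumes "finite A" "x \<in> A"
  shows "(\<Sum>j\<in>A. (f(x:=y)) j) = (\<Sum>j\<in>A. f j) - f x + (y::int)"
proof -
  have "(\<Sum>j\<in>A. (f(x:=y)) j) = (f(x:=y)) x + (\<Sum>j\<in>A-{x}. (f(x:=y)) j)"
    by (rule sum.remove[OF assms])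
  then have "(\<Sum>j\<in>A. (f(x:=y)) j) = y + (\<Sum>j\<in>A-{x}. (f(x:=y)) j)" by simp
  also have "(\<Sum>j\<in>A-{x}. (f(x:=y)) j) = (\<Sum>j\<in>A-{x}. f j)" by (rule sum.cong) auto
  finally show ?thesis using sum.remove[OF assms, of f] by simp
qed

lemma mod_ne:
  assumes "0 \<le> (x::int)" "x < n" "0 < y" "y < n"
  shows "(x + y) mod n \<noteq> x"
proof (cases "x + y < n")
  case True then show ?thesis using assms by simp
next
  case False
  have "(x + y - n) mod n = x + y - n" using assms False by (intro mod_pos_pos_trivial) auto
  then have "(x + y) mod n = x + y - n" by simp
  then show ?thesis using assms by simp
qed


lemma madd: "(a::int) mod n = 0 \<Longrightarrow> b mod n = 0 \<Longrightarrow> (a + b) mod n = 0"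
  by (metis dvd_add dvd_eq_mod_eq_0)

lemma msub: "(a::int) mod n = 0 \<Longrightarrow> b mod n = 0 \<Longrightarrow> (a - b) mod n = 0"
  by (metis dvd_diff dvd_eq_mod_eq_0)

lemma lb:
  assumes "csr_walk m n p k" "p 0 = (\<lambda>_. 0)"
  shows "\<exists>P. zero_partitioning m n (p k) P \<and> m \<le> card P + k"
  using assms
proof (induction k)
  case 0
  have "zero_partitioning m n (p 0) ((\<lambda>x. {x}) ` {1..m})"
    using 0 unfolding zero_partitioning_def by (auto intro: partition_on_singletons)
  moreover have "card ((\<lambda>x. {x}) ` {1..m}) = m" by (subst card_image) (auto simp: inj_on_def)
  ultimately show ?case by auto
next
  case (Suc k)
  have wk: "csr_walk m n p k" using Suc.prems unfolding csr_walk_def by auto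
  obtain P where zp: "zero_partitioning m n (p k) P" and cP: "m \<le> card P + k"
    using Suc.IH[OF wk Suc.prems(2)] by blast
  define v where "v = p k"
  define w where "w = p (Suc k)"
  have adj: "csr_adj m n v w" using Suc.prems unfolding csr_walk_def v_def w_def by auto
  then have vv: "csr_vertex m n v" and vw: "csr_vertex m n w"
    and c2: "card {i\<in>{1..m}. v i \<noteq> w i} = 2" unfolding csr_adj_def by auto
  define D where "D = {i\<in>{1..m}. v i \<noteq> w i}"
  obtain i i' where D: "D = {i, i'}" "i \<noteq> i'" using c2 unfolding D_def[symmetric] card_2_iff by blast
  have iD: "i \<in> {1..m}" "i' \<in> {1..m}" using D unfolding D_def by auto
  have eq_out: "\<And>j. j \<notin> D \<Longrightarrow> v j = w j" using vv vw unfolding D_def csr_vertex_def by auto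
  have key: "(\<Sum>j\<in>T. w j) = (\<Sum>j\<in>T. v j) + (\<Sum>j\<in>T \<inter> D. w j - v j)" if "T \<subseteq> {1..m}" for T
  proof -
    have "(\<Sum>j\<in>T. w j) - (\<Sum>j\<in>T. v j) = (\<Sum>j\<in>T \<inter> D. w j - v j)"
      by (rule sum_diff_loc) (use finite_subset[OF that] eq_out in auto)
    then show ?thesis by simp
  qed
  have Dsum: "(\<Sum>j\<in>D. w j - v j) mod int n = 0"
  proof -
    have "{1..m} \<inter> D = D" unfolding D_def by auto
    then have "(\<Sum>j\<in>D. w j - v j) = (\<Sum>j\<in>{1..m}. w j) - (\<Sum>j\<in>{1..m}. v j)"
      using key[of "{1..m}"] by simp
    moreover have "(\<Sum>j\<in>{1..m}. w j) mod int n = 0" "(\<Sum>j\<in>{1..m}. v j) mod int n = 0"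
      using vv vw unfolding csr_vertex_def by auto
    ultimately show ?thesis using msub by simp
  qed
  have part: "partition_on {1..m} P" and zs: "\<And>S. S\<in>P \<Longrightarrow> (\<Sum>j\<in>S. v j) mod int n = 0"
    using zp unfolding zero_partitioning_def v_def by auto
  have Psub: "\<And>S. S \<in> P \<Longrightarrow> S \<subseteq> {1..m}" using partition_onD1[OF part] by auto
  have finS: "\<And>S. S \<in> P \<Longrightarrow> finite S" using Psub finite_subset by blast
  have disj: "\<And>A B. A \<in> P \<Longrightarrow> B \<in> P \<Longrightarrow> A \<noteq> B \<Longrightarrow> A \<inter> B = {}"
    using partition_onD2[OF part] by (rule disjointD)
  obtain S where S: "S \<in> P" "i \<in> S" using partition_onD1[OF part] iD by auto
  obtain S' where S': "S' \<in> P" "i' \<in> S'" using partition_onD1[OF part] iD by auto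
  show ?case
  proof (cases "S = S'")
    case True
    have "zero_partitioning m n w P"
      unfolding zero_partitioning_def
    proof (intro conjI ballI part)
      fix T assume T: "T \<in> P"
      show "(\<Sum>j\<in>T. w j) mod int n = 0"
      proof (cases "T = S")
        case True
        then have "T \<inter> D = D" using S S' \<open>S = S'\<close> D by auto
        then show ?thesis using key[OF Psub[OF T]] zs[OF T] Dsum madd by simp
      next
        case False
        then have "T \<inter> S = {}" using disj[OF T S(1)] by simp
        then have "T \<inter> D = {}" using S S' \<open>S = S'\<close> D by auto
        then show ?thesis using key[OF Psub[OF T]] zs[OF T] by simp
      qed
    qed
    then show ?thesis using cP unfolding w_def by auto
  next
    case False
    define P' where "P' = insert (S \<union> S') (P - {S, S'})"
    have SS: "S \<inter> S' = {}" using disj[OF S(1) S'(1) False] .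
    have notin: "S \<union> S' \<notin> P - {S, S'}"
    proof
      assume "S \<union> S' \<in> P - {S, S'}"
      then have "S \<union> S' \<in> P" "S \<union> S' \<noteq> S" by auto
      then have "(S \<union> S') \<inter> S = {}" by (rule disj[OF _ S(1)])
      then show False using S by auto
    qed
    have fP: "finite P" using part_card_le(1)[OF part] .
    have sub2: "{S, S'} \<subseteq> P" using S S' by auto
    have c2: "card {S, S'} = 2" using False by auto
    have "card (P - {S, S'}) = card P - 2"
      using card_Diff_subset[OF _ sub2] c2 by simp
    moreover have "card P \<ge> 2" using card_mono[OF fP sub2] c2 by simp
    ultimately have cardP': "card P' = card P - 1" unfolding P'_def using notin fP by simp
    have partP': "partition_on {1..m} P'"
    proof (rule partition_onI)
      show "\<Union>P' = {1..m}" using partition_onD1[OF part] S S' unfolding P'_def by auto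
      show "{} \<notin> P'" using partition_onD3[OF part] S unfolding P'_def by auto
      fix p q assume pq: "p \<in> P'" "q \<in> P'" "p \<noteq> q"
      show "disjnt p q" unfolding disjnt_def
      proof (cases "p = S \<union> S'")
        case True
        then have "q \<in> P" "q \<noteq> S" "q \<noteq> S'" using pq unfolding P'_def by auto
        then have "S \<inter> q = {}" "S' \<inter> q = {}" using disj[OF S(1) \<open>q \<in> P\<close>] disj[OF S'(1) \<open>q \<in> P\<close>] by auto
        then show "p \<inter> q = {}" using True by auto
      next
        case pF: False
        then have p: "p \<in> P" "p \<noteq> S" "p \<noteq> S'" using pq unfolding P'_def by auto
        show "p \<inter> q = {}"
        proof (cases "q = S \<union> S'")
          case True
          have "S \<inter> p = {}" "S' \<inter> p = {}" using disj[OF S(1) p(1)] disj[OF S'(1) p(1)] p by auto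
          then show ?thesis using True by auto
        next
          case False
          then have "q \<in> P" using pq unfolding P'_def by auto
          then show ?thesis using disj[OF p(1) _ pq(3)] by simp
        qed
      qed
    qed
    have "zero_partitioning m n w P'"
      unfolding zero_partitioning_def
    proof (intro conjI ballI partP')
      fix T assume T: "T \<in> P'"
      show "(\<Sum>j\<in>T. w j) mod int n = 0"
      proof (cases "T = S \<union> S'")
        case True
        then have TD: "T \<inter> D = D" using S S' D by auto
        have "(\<Sum>j\<in>T. v j) = (\<Sum>j\<in>S. v j) + (\<Sum>j\<in>S'. v j)"
          unfolding True by (rule sum.union_disjoint) (use finS S S' SS in auto)
        then have "(\<Sum>j\<in>T. v j) mod int n = 0" using zs S S' madd by simp
        moreover have "T \<subseteq> {1..m}" using True Psub S S' by auto
        ultimately show ?thesis using key[of T] TD Dsum madd by simp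
      next
        case False
        then have T': "T \<in> P" "T \<noteq> S" "T \<noteq> S'" using T unfolding P'_def by auto
        then have "T \<inter> S = {}" "T \<inter> S' = {}" using disj[OF T'(1) S(1) T'(2)] disj[OF T'(1) S'(1) T'(3)] by auto
        then have "T \<inter> D = {}" using S S' D by auto
        then show ?thesis using key[OF Psub[OF T'(1)]] zs[OF T'(1)] by simp
      qed
    qed
    moreover have "m \<le> card P' + Suc k" using cP cardP' by simp
    ultimately show ?thesis unfolding w_def by auto
  qed
qed


lemma ub:
  assumes "0 < n"
  shows "csr_vertex m n b \<Longrightarrow> zero_partitioning m n b P \<Longrightarrow>
    \<exists>k p. csr_walk m n p k \<and> p 0 = (\<lambda>_. 0) \<and> p k = b \<and> k + card P \<le> m"
proof (induction "card {i\<in>{1..m}. b i \<noteq> 0}" arbitrary: b P rule: less_induct)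
  case less
  have part: "partition_on {1..m} P" and zs: "\<And>S. S\<in>P \<Longrightarrow> (\<Sum>j\<in>S. b j) mod int n = 0"
    using less.prems unfolding zero_partitioning_def by auto
  have vb: "\<And>i. i\<in>{1..m} \<Longrightarrow> 0 \<le> b i \<and> b i < int n" "\<And>i. i\<notin>{1..m} \<Longrightarrow> b i = 0"
    "(\<Sum>i\<in>{1..m}. b i) mod int n = 0"
    using less.prems(1) unfolding csr_vertex_def by auto
  have cPm: "card P \<le> m" using part_card_le(2)[OF part] .
  show ?case
  proof (cases "\<exists>i\<in>{1..m}. b i \<noteq> 0")
    case False
    have b0: "b = (\<lambda>_. 0)"
    proof
      fix j show "b j = 0" using False vb(2)[of j] by (cases "j \<in> {1..m}") auto
    qed
    have "csr_walk m n (\<lambda>_. b) 0" using less.prems(1) unfolding csr_walk_def by simp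
    then show ?thesis using b0 cPm by (intro exI[of _ 0] exI[of _ "\<lambda>_. b"]) simp
  next
    case True
    then obtain i where i: "i \<in> {1..m}" "b i \<noteq> 0" by auto
    have bi: "0 < b i" "b i < int n" using vb(1)[OF i(1)] i(2) by auto
    obtain S where S: "S \<in> P" "i \<in> S" using partition_onD1[OF part] i by auto
    have Ssub: "S \<subseteq> {1..m}" using partition_onD1[OF part] S by auto
    have finS: "finite S" using Ssub finite_subset by blast
    have disj: "\<And>A B. A \<in> P \<Longrightarrow> B \<in> P \<Longrightarrow> A \<noteq> B \<Longrightarrow> A \<inter> B = {}"
      using partition_onD2[OF part] by (rule disjointD)
    have sumS: "(\<Sum>j\<in>S. b j) = b i + (\<Sum>j\<in>S-{i}. b j)" by (rule sum.remove[OF finS S(2)])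
    have "\<exists>i'\<in>S-{i}. b i' \<noteq> 0"
    proof (rule ccontr)
      assume "\<not> ?thesis"
      then have "(\<Sum>j\<in>S-{i}. b j) = 0" by (intro sum.neutral) auto
      then have "(\<Sum>j\<in>S. b j) = b i" using sumS by simp
      then have "b i mod int n = 0" using zs[OF S(1)] by simp
      then show False using bi by simp
    qed
    then obtain i' where i': "i' \<in> S" "i' \<noteq> i" "b i' \<noteq> 0" by auto
    have i'm: "i' \<in> {1..m}" using Ssub i' by auto
    have bi': "0 \<le> b i'" "b i' < int n" using vb(1)[OF i'm] by auto
    define b' where "b' = b(i := 0, i' := (b i' + b i) mod int n)"
    have b'i: "b' i = 0" unfolding b'_def using i' by simp
    have b'i': "b' i' = (b i' + b i) mod int n" unfolding b'_def by simp
    have b'o: "\<And>j. j \<noteq> i \<Longrightarrow> j \<noteq> i' \<Longrightarrow> b' j = b j" unfolding b'_def by simp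
    have sumupd: "(\<Sum>j\<in>A. b' j) mod int n = (b i + (\<Sum>j\<in>A - {i}. b j)) mod int n"
      if A: "finite A" "i \<in> A" "i' \<in> A" for A
    proof -
      have "(\<Sum>j\<in>A. b' j) = (\<Sum>j\<in>A. (b(i:=0)) j) - (b(i:=0)) i' + (b i' + b i) mod int n"
        unfolding b'_def by (rule sum_upd[OF A(1) A(3)])
      also have "(\<Sum>j\<in>A. (b(i:=0)) j) = (\<Sum>j\<in>A. b j) - b i + 0"
        by (rule sum_upd[OF A(1) A(2)])
      also have "(\<Sum>j\<in>A. b j) = b i + (\<Sum>j\<in>A - {i}. b j)" by (rule sum.remove[OF A(1) A(2)])
      finally have "(\<Sum>j\<in>A. b' j) = ((\<Sum>j\<in>A - {i}. b j) - b i') + (b i' + b i) mod int n"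
        using i' by simp
      then have "(\<Sum>j\<in>A. b' j) mod int n = ((\<Sum>j\<in>A - {i}. b j) - b i' + (b i' + b i)) mod int n"
        by (simp add: mod_add_right_eq)
      then show ?thesis by (simp add: algebra_simps)
    qed
    have vb': "csr_vertex m n b'"
      unfolding csr_vertex_def
    proof (intro conjI ballI allI impI)
      fix j assume j: "j \<in> {1..m}"
      show "0 \<le> b' j" "b' j < int n"
      proof -
        have "(0 \<le> b' j \<and> b' j < int n)"
        proof (cases "j = i'")
          case True then show ?thesis using b'i' assms by simp
        next
          case False then show ?thesis using vb(1)[OF j] b'i b'o[of j] assms by (cases "j = i") auto
        qed
        then show "0 \<le> b' j" "b' j < int n" by auto
      qed
    next
      fix j assume "j \<notin> {1..m}"
      then show "b' j = 0" using vb(2) b'o[of j] i i'm by auto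
    next
      have "(\<Sum>j\<in>{1..m}. b' j) mod int n = (b i + (\<Sum>j\<in>{1..m} - {i}. b j)) mod int n"
        by (rule sumupd) (use i i'm in auto)
      also have "b i + (\<Sum>j\<in>{1..m} - {i}. b j) = (\<Sum>j\<in>{1..m}. b j)"
        by (rule sum.remove[symmetric]) (use i in auto)
      finally show "(\<Sum>j\<in>{1..m}. b' j) mod int n = 0" using vb(3) by simp
    qed
    have adj: "csr_adj m n b' b"
      unfolding csr_adj_def
    proof (intro conjI vb' less.prems(1))
      have ne: "b' i' \<noteq> b i'" using b'i' mod_ne[OF bi' bi] by simp
      have "{j\<in>{1..m}. b' j \<noteq> b j} = {i, i'}"
      proof (rule set_eqI)
        fix j show "j \<in> {j\<in>{1..m}. b' j \<noteq> b j} \<longleftrightarrow> j \<in> {i, i'}"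
        proof (cases "j = i \<or> j = i'")
          case True then show ?thesis using b'i i(2) ne i i'm by auto
        next
          case False then show ?thesis using b'o[of j] by auto
        qed
      qed
      then show "card {j\<in>{1..m}. b' j \<noteq> b j} = 2" using i'(2) by simp
    qed
    define P' where "P' = insert {i} (insert (S - {i}) (P - {S}))"
    have Sne: "S - {i} \<noteq> {}" using i' by auto
    have n1: "{i} \<notin> insert (S - {i}) (P - {S})"
    proof
      assume "{i} \<in> insert (S - {i}) (P - {S})"
      then have "{i} \<in> P \<and> {i} \<noteq> S" by auto
      then have "{i} \<inter> S = {}" using S(1) by (intro disj) auto
      then show False using S by auto
    qed
    have n2: "S - {i} \<notin> P - {S}"
    proof
      assume "S - {i} \<in> P - {S}"
      then have "(S - {i}) \<inter> S = {}" using S(1) by (intro disj) auto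
      then show False using Sne by auto
    qed
    have fP: "finite P" using part_card_le(1)[OF part] .
    have cP': "card P' = card P + 1"
    proof -
      have "card (P - {S}) = card P - 1" using S(1) fP by simp
      moreover have "card P > 0" using S(1) fP card_gt_0_iff by blast
      ultimately show ?thesis unfolding P'_def using n1 n2 fP by simp
    qed
    have partP': "partition_on {1..m} P'"
    proof (rule partition_onI)
      show "\<Union>P' = {1..m}" using partition_onD1[OF part] S unfolding P'_def by auto
      show "{} \<notin> P'" using partition_onD3[OF part] Sne unfolding P'_def by auto
      fix p q assume pq: "p \<in> P'" "q \<in> P'" "p \<noteq> q"
      have mem: "x = {i} \<or> x = S - {i} \<or> (x \<in> P \<and> x \<noteq> S)" if "x \<in> P'" for x
        using that unfolding P'_def by blast
      have TS: "x \<inter> S = {}" if "x \<in> P" "x \<noteq> S" for x using disj[OF that(1) S(1) that(2)] .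
      have ex: "{i} \<inter> (S - {i}) = {}" "(S - {i}) \<inter> {i} = {}" by auto
      have ex2: "x \<inter> {i} = {}" "{i} \<inter> x = {}" "x \<inter> (S - {i}) = {}" "(S - {i}) \<inter> x = {}"
        if "x \<in> P" "x \<noteq> S" for x using TS[OF that] S(2) by auto
      show "disjnt p q" unfolding disjnt_def
        using mem[OF pq(1)] mem[OF pq(2)]
      proof (elim disjE conjE)
      qed (use pq(3) ex ex2 disj in simp_all)
    qed
    have zp': "zero_partitioning m n b' P'"
      unfolding zero_partitioning_def
    proof (intro conjI ballI partP')
      fix T assume T: "T \<in> P'"
      show "(\<Sum>j\<in>T. b' j) mod int n = 0"
      proof (cases "T = {i}")
        case True then show ?thesis using b'i by simp
      next
        case F1: False
        show ?thesis
        proof (cases "T = S - {i}")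
          case True
          have "(\<Sum>j\<in>S. b' j) mod int n = (b i + (\<Sum>j\<in>S - {i}. b j)) mod int n"
            by (rule sumupd) (use finS S i' in auto)
          moreover have "(\<Sum>j\<in>S. b' j) = b' i + (\<Sum>j\<in>S - {i}. b' j)"
            by (rule sum.remove[OF finS S(2)])
          ultimately show ?thesis using True b'i sumS zs[OF S(1)] by simp
        next
          case False
          then have T': "T \<in> P" "T \<noteq> S" using T F1 unfolding P'_def by auto
          then have "T \<inter> S = {}" using disj[OF T'(1) S(1) T'(2)] by simp
          then have "(\<Sum>j\<in>T. b' j) = (\<Sum>j\<in>T. b j)"
          proof (intro sum.cong refl)
            fix x assume "T \<inter> S = {}" "x \<in> T"
            then have "x \<notin> S" by auto
            then show "b' x = b x" using S i' by (intro b'o) auto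
          qed
          then show ?thesis using zs[OF T'(1)] by simp
        qed
      qed
    qed
    have lt: "card {j\<in>{1..m}. b' j \<noteq> 0} < card {j\<in>{1..m}. b j \<noteq> 0}"
    proof (rule psubset_card_mono)
      show "finite {j\<in>{1..m}. b j \<noteq> 0}" by simp
      show "{j\<in>{1..m}. b' j \<noteq> 0} \<subset> {j\<in>{1..m}. b j \<noteq> 0}"
      proof
        show "{j\<in>{1..m}. b' j \<noteq> 0} \<subseteq> {j\<in>{1..m}. b j \<noteq> 0}"
        proof
          fix j assume j: "j \<in> {j\<in>{1..m}. b' j \<noteq> 0}"
          show "j \<in> {j\<in>{1..m}. b j \<noteq> 0}"
          proof (cases "j = i \<or> j = i'")
            case True then show ?thesis using j b'i i i' i'm by auto
          next
            case False then show ?thesis using j b'o[of j] by auto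
          qed
        qed
        show "{j\<in>{1..m}. b' j \<noteq> 0} \<noteq> {j\<in>{1..m}. b j \<noteq> 0}" using b'i i by blast
      qed
    qed
    obtain k p where kp: "csr_walk m n p k" "p 0 = (\<lambda>_. 0)" "p k = b'" "k + card P' \<le> m"
      using less.hyps[OF lt vb' zp'] by blast
    have "csr_walk m n (p(Suc k := b)) (Suc k)" using walk_snoc[OF kp(1)] adj kp(3) by simp
    then show ?thesis using kp cP' by (intro exI[of _ "Suc k"] exI[of _ "p(Suc k := b)"]) simp
  qed
qed


theorem lemma1:
  fixes m n :: nat and b :: "nat \<Rightarrow> int"
  assumes "0 < m" and "0 < n"
    and "csr_vertex m n b"
  shows "(\<exists>k. csr_connected_by m n (\<lambda>_. 0) b k) \<and>
         csr_dist m n (\<lambda>_. 0) b = m - tau m n b"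
proof -
  have zp0: "zero_partitioning m n b {{1..m}}"
    using assms unfolding zero_partitioning_def csr_vertex_def
    by (auto intro: partition_on_space)
  define T where "T = {t. \<exists>P. zero_partitioning m n b P \<and> card P = t}"
  have fT: "finite T"
  proof (rule finite_subset)
    show "T \<subseteq> {..m}" unfolding T_def zero_partitioning_def using part_card_le(2) by auto
  qed simp
  have "T \<noteq> {}" using zp0 unfolding T_def by auto
  then have "tau m n b \<in> T" unfolding tau_def T_def[symmetric] using fT by (rule Max_in[rotated])
  then obtain Pt where Pt: "zero_partitioning m n b Pt" "card Pt = tau m n b" unfolding T_def by auto
  obtain k p where kp: "csr_walk m n p k" "p 0 = (\<lambda>_. 0)" "p k = b" "k + card Pt \<le> m"
    using ub[OF assms(2) assms(3) Pt(1)] by blast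
  have cb: "csr_connected_by m n (\<lambda>_. 0) b k" unfolding csr_connected_by_def using kp by blast
  have d1: "csr_dist m n (\<lambda>_. 0) b \<le> k" unfolding csr_dist_def by (rule Least_le) (rule cb)
  have "csr_connected_by m n (\<lambda>_. 0) b (csr_dist m n (\<lambda>_. 0) b)"
    unfolding csr_dist_def by (rule LeastI) (rule cb)
  then obtain q where q: "csr_walk m n q (csr_dist m n (\<lambda>_. 0) b)" "q 0 = (\<lambda>_. 0)"
    "q (csr_dist m n (\<lambda>_. 0) b) = b" unfolding csr_connected_by_def by blast
  obtain P where P: "zero_partitioning m n b P" "m \<le> card P + csr_dist m n (\<lambda>_. 0) b"
    using lb[OF q(1) q(2)] q(3) by auto
  have "card P \<in> T" using P(1) unfolding T_def by auto
  then have "card P \<le> tau m n b" unfolding tau_def T_def[symmetric] using fT by simp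
  then show ?thesis using cb d1 P(2) kp(4) Pt(2) by auto
qed

end
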